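(* Let $N\ge K\ge1$, $\mathbf{H}\in\mathbb{R}^{N\times K}$ full column rank, let $\mathbf{u}_1$ be a unit eigenvector of $\mathbf{H}\mathbf{H}^T$ for its largest eigenvalue $\rho_1^2$. Let $M_1\ge1$, $M=M_1$, and use only the measurement matrix $\boldsymbol{\Phi}_s=\frac{1}{\sqrt{M_1}}\mathbf{1}_{M_1,1}\otimes\mathbf{u}_1^T$; let $\bar z_s[n]=\frac{1}{M_1}\mathbf{1}_{1,M_1}\mathbf{z}_s[n]$. Assume the noise variance $\sigma_0^2$ is known and, for $\gamma>0$, consider the test deciding $\mathcal{H}_1$ when $$\mathcal{T}=\frac{\sum_{n=1}^{N_b}|\bar z_s[n]|^2}{\sigma_0^2/M_1^2}>\gamma.$$ Then $P_{FA}=\mathbb{Q}_{\chi^2(N_b)}(\gamma)$ and $P_D=\mathbb{Q}_{\chi^2(N_b)}\Big(\frac{\sigma_0^2}{\sigma_0^2+M_1\sigma_x^2\rho_1^2}\gamma\Big)$.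
   Context: Observations over $n=1,\ldots,N_b$: rows $\boldsymbol{\phi}_m^T$ of $\boldsymbol{\Phi}_s$ represent $M_1$ devices; under $\mathcal{H}_0$ device $m$ outputs $z_m[n]=\boldsymbol{\phi}_m^T\mathbf{w}_m[n]$, under $\mathcal{H}_1$ it outputs $z_m[n]=\boldsymbol{\phi}_m^T(\mathbf{H}\mathbf{x}[n]+\mathbf{w}_m[n])$, with $\mathbf{x}[n]\sim\mathcal{N}(\mathbf{0}_{K,1},\sigma_x^2\mathbf{I}_K)$, $\mathbf{w}_m[n]\sim\mathcal{N}(\mathbf{0}_{N,1},\sigma_0^2\mathbf{I}_N)$, $\sigma_0^2>0$, all mutually independent across $m,n$; $\mathbf{z}_s[n]=(z_1[n],\ldots,z_{M_1}[n])^T$. $\mathbf{1}_{P,Q}$ is the $P\times Q$ all-ones matrix and $\otimes$ the Kronecker product. $P_{FA}=\Pr(\mathcal{T}>\gamma\mid\mathcal{H}_0)$, $P_D=\Pr(\mathcal{T}>\gamma\mid\mathcal{H}_1)$; $\mathbb{Q}_{\chi^2(d)}(x)=\Pr(X>x)$ for $X$ chi-squared with $d$ degrees of freedom. *)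

theory Defs
  imports "HOL-Probability.Probability"
begin

definition chi2_density :: "nat \<Rightarrow> real \<Rightarrow> real" where
  "chi2_density d x =
     (if 0 < x then x powr (real d / 2 - 1) * exp (- x / 2) / (2 powr (real d / 2) * Gamma (real d / 2))
      else 0)"

definition Q_chi2 :: "nat \<Rightarrow> real \<Rightarrow> real" where
  "Q_chi2 d x = (\<integral>t\<in>{x<..}. chi2_density d t \<partial>lborel)"

definition is_largest_eigenvalue :: "real^'n^'n \<Rightarrow> real \<Rightarrow> bool" where
  "is_largest_eigenvalue A l \<longleftrightarrow>
     (\<exists>v. v \<noteq> 0 \<and> A *v v = l *\<^sub>R v) \<and>
     (\<forall>\<mu> v. v \<noteq> 0 \<and> A *v v = \<mu> *\<^sub>R v \<longrightarrow> \<mu> \<le> l)"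

end

theory Submission
  imports Defs
begin
definition gd :: "real \<Rightarrow> real \<Rightarrow> real" where
  "gd a x = (if 0 < x then x powr (a - 1) * exp (- x / 2) / (2 powr a * Gamma a) else 0)"

lemma chi2_gd: "chi2_density d = gd (real d / 2)"
  by (rule ext) (simp add: chi2_density_def gd_def)

lemma gd_nonneg: "a > 0 \<Longrightarrow> 0 \<le> gd a x"
  by (auto simp: gd_def intro!: divide_nonneg_pos mult_pos_pos Gamma_real_pos)

lemma gd_measurable[measurable]: "gd a \<in> borel_measurable borel"
  unfolding gd_def by measurable

lemma beta_nn:
  assumes "a > 0" "b > 0"
  shows "(\<integral>\<^sup>+t. ennreal (t powr (b - 1) * (1 - t) powr (a - 1)) * indicator {0..1} t \<partial>lborel) = ennreal (Beta b a)"
  by (rule nn_integral_has_integral_lebesgue'[OF _ has_integral_Beta_real]) (use assms in auto)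

lemma conv_gd:
  assumes a: "a > 0" and b: "b > 0"
  shows "(\<lambda>x. \<integral>\<^sup>+y. ennreal (gd a (x - y)) * ennreal (gd b y) \<partial>lborel) = gd (a + b)"
proof
  fix x :: real
  show "(\<integral>\<^sup>+y. ennreal (gd a (x - y)) * ennreal (gd b y) \<partial>lborel) = gd (a + b) x"
  proof (cases "x > 0")
    case False
    have z: "\<And>y. ennreal (gd a (x - y)) * ennreal (gd b y) = 0"
      using False by (auto simp: gd_def)
    have "(\<integral>\<^sup>+y. ennreal (gd a (x - y)) * ennreal (gd b y) \<partial>lborel) = (\<integral>\<^sup>+(y::real). 0 \<partial>lborel)"
      by (simp only: z)
    then show ?thesis using False by (simp add: gd_def)
  next
    case xpos: True
    define K where "K = x powr (a + b - 2) * exp (- x / 2) / (2 powr (a + b) * Gamma a * Gamma b)"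
    have K0: "K \<ge> 0" unfolding K_def using a b
      by (auto intro!: divide_nonneg_pos mult_pos_pos Gamma_real_pos)
    have pt: "ennreal (gd a (x - x * t)) * ennreal (gd b (x * t)) =
          ennreal K * (ennreal (t powr (b - 1) * (1 - t) powr (a - 1)) * indicator {0..1} t)" for t
    proof (cases "0 < t \<and> t < 1")
      case True
      have e1: "(x - x * t) powr (a - 1) = x powr (a - 1) * (1 - t) powr (a - 1)"
        using True xpos by (simp add: powr_mult[symmetric] algebra_simps)
      have e2: "(x * t) powr (b - 1) = x powr (b - 1) * t powr (b - 1)"
        using True xpos by (simp add: powr_mult)
      have e3: "x powr (a - 1) * x powr (b - 1) = x powr (a + b - 2)"
        using xpos by (simp add: powr_add[symmetric])
      have e4: "exp (- (x - x * t) / 2) * exp (- (x * t) / 2) = exp (- x / 2)"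
        by (simp add: exp_add[symmetric] field_simps)
      have e5: "(2::real) powr a * 2 powr b = 2 powr (a + b)" by (simp add: powr_add)
      have "gd a (x - x * t) * gd b (x * t) = K * (t powr (b - 1) * (1 - t) powr (a - 1))"
        using True xpos unfolding gd_def K_def
        apply (simp add: e1 e2)
        apply (simp add: e3[symmetric] e4[symmetric] e5[symmetric] field_simps mult_exp_exp)
        done
      then show ?thesis using True K0 a b
        by (simp add: ennreal_mult'[symmetric] ennreal_mult[symmetric] gd_nonneg)
    next
      case False
      then have "t \<le> 0 \<or> t \<ge> 1" by auto
      then show ?thesis
      proof
        assume "t \<le> 0" 
        then show ?thesis using xpos
          by (cases "t = 0") (auto simp: gd_def zero_less_mult_iff indicator_def)
      next
        assume "t \<ge> 1"
        then show ?thesis using xpos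
          by (cases "t = 1") (auto simp: gd_def indicator_def mult_le_0_iff)
      qed
    qed
    have "(\<integral>\<^sup>+y. ennreal (gd a (x - y)) * ennreal (gd b y) \<partial>lborel)
        = ennreal \<bar>x\<bar> * (\<integral>\<^sup>+t. ennreal (gd a (x - (0 + x * t))) * ennreal (gd b (0 + x * t)) \<partial>lborel)"
      using xpos by (intro nn_integral_real_affine) auto
    also have "\<dots> = ennreal x * (\<integral>\<^sup>+t. ennreal K * (ennreal (t powr (b - 1) * (1 - t) powr (a - 1)) * indicator {0..1} t) \<partial>lborel)"
      using xpos pt by simp
    also have "\<dots> = ennreal x * (ennreal K * ennreal (Beta b a))"
      by (subst nn_integral_cmult) (auto simp: beta_nn a b)
    also have "\<dots> = ennreal (x * K * Beta b a)"
    proof -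
      have "Beta b a \<ge> 0" using a b by (simp add: Beta_def Gamma_real_pos less_imp_le)
      then show ?thesis using xpos K0 by (simp add: ennreal_mult mult.assoc)
    qed
    also have "x * K * Beta b a = gd (a + b) x"
    proof -
      have "x * x powr (a + b - 2) = x powr (a + b - 1)"
      proof -
        have "x powr (a + b - 1) = x powr (1 + (a + b - 2))" by simp
        also have "\<dots> = x powr 1 * x powr (a + b - 2)" by (rule powr_add)
        finally show ?thesis using xpos by simp
      qed
      moreover have "Gamma a > 0" "Gamma b > 0" "Gamma (a+b) > 0" using a b by (auto intro: Gamma_real_pos)
      ultimately show ?thesis using xpos
        unfolding K_def gd_def Beta_def by (simp add: field_simps)
    qed
    finally show ?thesis .
  qed
qed

lemma gd_half_sq:
  assumes x: "x > 0"
  shows "gd (1/2) (x\<^sup>2) * (2 * x) = 2 * std_normal_density x"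
proof -
  have p: "(x\<^sup>2) powr - (1 / 2) = 1 / x"
  proof -
    have "(x\<^sup>2) powr - (1 / 2) = (x powr 2) powr (-1/2)"
      using x by (simp add: powr_realpow)
    also have "\<dots> = x powr (-1)" by (simp add: powr_powr)
    also have "\<dots> = 1 / x" using x by (simp add: powr_minus divide_inverse)
    finally show ?thesis .
  qed
  have s: "(2::real) powr (1/2) = sqrt 2" by (simp add: powr_half_sqrt)
  have g: "Gamma (1/2::real) = sqrt pi" by (rule Gamma_one_half_real)
  have sp: "sqrt (2 * pi) = sqrt 2 * sqrt pi" by (simp add: real_sqrt_mult)
  show ?thesis using x
    unfolding gd_def std_normal_density_def
    by (simp add: p s g real_sqrt_mult field_simps)
qed

lemma (in prob_space) square_std_normal:
  assumes Z: "distributed M lborel Z std_normal_density"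
  shows "distributed M lborel (\<lambda>\<omega>. (Z \<omega>)\<^sup>2) (gd (1/2))"
proof -
  have Zm[measurable]: "Z \<in> borel_measurable M"
    using distributed_measurable[OF Z] by simp
  define G where "G a = measure M {\<omega>\<in>space M. (Z \<omega>)\<^sup>2 \<le> a}" for a
  have key: "(\<integral>\<^sup>+x. ennreal (gd (1/2) x) * indicator {..a} x \<partial>lborel) = emeasure M {\<omega>\<in>space M. (Z \<omega>)\<^sup>2 \<le> a}" for a
  proof (cases "a < 0")
    case True
    have e: "{\<omega>\<in>space M. (Z \<omega>)\<^sup>2 \<le> a} = {}" using True
      by (auto simp: not_le) (smt (verit, best) zero_le_power2)
    have z: "\<And>x. ennreal (gd (1/2) x) * indicator {..a} x = 0"
      using True by (auto simp: gd_def indicator_def)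
    have zz: "(\<integral>\<^sup>+x. ennreal (gd (1/2) x) * indicator {..a} x \<partial>lborel) = (\<integral>\<^sup>+(x::real). 0 \<partial>lborel)"
      by (simp only: z)
    show ?thesis unfolding e zz by simp
  next
    case False
    define r where "r = sqrt a"
    have r0: "r \<ge> 0" and ra: "r\<^sup>2 = a" using False by (auto simp: r_def)
    have "(\<integral>\<^sup>+x. ennreal (gd (1/2) x) * indicator {..a} x \<partial>lborel) =
          (\<integral>\<^sup>+x. ennreal (gd (1/2) x * indicator {0\<^sup>2..r\<^sup>2} x) \<partial>lborel)"
      using ra by (intro nn_integral_cong) (auto simp: gd_def indicator_def)
    also have "\<dots> = (\<integral>\<^sup>+x. ennreal (gd (1/2) (x\<^sup>2) * (2 * x) * indicator {0..r} x) \<partial>lborel)"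
      by (rule nn_integral_substitution[where g = "\<lambda>x. x\<^sup>2" and g' = "\<lambda>x. 2 * x"])
         (auto intro!: derivative_eq_intros continuous_intros simp: r0 set_borel_measurable_def)
    also have "\<dots> = (\<integral>\<^sup>+x. ennreal (2 * std_normal_density x * indicator {0..r} x) \<partial>lborel)"
    proof (rule nn_integral_cong_AE)
      show "AE x in lborel. ennreal (gd (1/2) (x\<^sup>2) * (2 * x) * indicator {0..r} x) =
              ennreal (2 * std_normal_density x * indicator {0..r} x)"
        using AE_lborel_singleton[of 0]
        by eventually_elim (auto simp: gd_half_sq indicator_def)
    qed
    also have "\<dots> = (\<integral>\<^sup>+x. ennreal (std_normal_density x) * indicator {-r..r} x \<partial>lborel)"
    proof -
      have refl: "(\<integral>\<^sup>+x. ennreal (std_normal_density x) * indicator {-r..0} x \<partial>lborel)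
          = (\<integral>\<^sup>+x. ennreal (std_normal_density x) * indicator {0..r} x \<partial>lborel)"
        by (subst nn_integral_real_affine[where c = "-1" and t = 0]) 
           (auto simp: std_normal_density_def indicator_def intro!: nn_integral_cong)
      have "(\<integral>\<^sup>+x. ennreal (std_normal_density x) * indicator {-r..r} x \<partial>lborel) =
            (\<integral>\<^sup>+x. ennreal (std_normal_density x) * indicator {-r..0} x + ennreal (std_normal_density x) * indicator {0..r} x \<partial>lborel)"
      proof (rule nn_integral_cong_AE)
        show "AE x in lborel. ennreal (std_normal_density x) * indicator {-r..r} x =
           ennreal (std_normal_density x) * indicator {-r..0} x + ennreal (std_normal_density x) * indicator {0..r} x"
          using AE_lborel_singleton[of 0]
          by eventually_elim (auto simp: indicator_def)
      qed
      also have "\<dots> = 2 * (\<integral>\<^sup>+x. ennreal (std_normal_density x) * indicator {0..r} x \<partial>lborel)"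
        by (subst nn_integral_add) (auto simp: refl mult_2)
      also have "\<dots> = (\<integral>\<^sup>+x. ennreal (2 * std_normal_density x * indicator {0..r} x) \<partial>lborel)"
        by (subst nn_integral_cmult[symmetric]) (auto intro!: nn_integral_cong simp: ennreal_mult indicator_def)
      finally show ?thesis by simp
    qed
    also have "\<dots> = emeasure M (Z -` {-r..r} \<inter> space M)"
      by (rule distributed_emeasure[OF Z, symmetric]) simp
    also have "Z -` {-r..r} \<inter> space M = {\<omega>\<in>space M. (Z \<omega>)\<^sup>2 \<le> a}"
    proof -
      have sq: "(-r \<le> t \<and> t \<le> r) \<longleftrightarrow> t\<^sup>2 \<le> a" for t
      proof -
        have "\<bar>t\<bar> \<le> \<bar>r\<bar> \<longleftrightarrow> t\<^sup>2 \<le> r\<^sup>2" by (rule abs_le_square_iff)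
        then show ?thesis using r0 ra by (auto simp: abs_le_iff)
      qed
      show ?thesis using sq by auto
    qed
    finally show ?thesis .
  qed
  show ?thesis
  proof (rule distributedI_borel_atMost[where g = G])
    show "AE x in lborel. 0 \<le> gd (1/2) x" by (simp add: gd_nonneg)
    show "(\<integral>\<^sup>+x. ennreal (gd (1/2) x * indicator {..a} x) \<partial>lborel) = ennreal (G a)" for a
    proof -
      have "(\<integral>\<^sup>+x. ennreal (gd (1/2) x * indicator {..a} x) \<partial>lborel) = (\<integral>\<^sup>+x. ennreal (gd (1/2) x) * indicator {..a} x \<partial>lborel)"
        by (intro nn_integral_cong) (simp add: indicator_def)
      then show ?thesis using key[of a] by (simp add: G_def emeasure_eq_measure)
    qed
    show "emeasure M {x\<in>space M. (Z x)\<^sup>2 \<le> a} = ennreal (G a)" for a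
      by (simp add: G_def emeasure_eq_measure)
  qed simp_all
qed

lemma (in prob_space) chi2_sum:
  assumes fin: "finite I" and ne: "I \<noteq> {}"
    and ind: "indep_vars (\<lambda>_. borel) Z I"
    and Zd: "\<And>i. i \<in> I \<Longrightarrow> distributed M lborel (Z i) std_normal_density"
  shows "distributed M lborel (\<lambda>\<omega>. \<Sum>i\<in>I. (Z i \<omega>)\<^sup>2) (chi2_density (card I))"
  using fin ne ind Zd
proof (induct I rule: finite_ne_induct)
  case (singleton i)
  then show ?case using square_std_normal[of "Z i"] by (simp add: chi2_gd)
next
  case (insert i I)
  have ind2: "indep_vars (\<lambda>_. borel) (\<lambda>j \<omega>. (Z j \<omega>)\<^sup>2) (insert i I)"
    by (rule indep_vars_compose2[OF insert.prems(1)]) simp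
  have iv: "indep_var borel (\<lambda>\<omega>. (Z i \<omega>)\<^sup>2) borel (\<lambda>\<omega>. \<Sum>j\<in>I. (Z j \<omega>)\<^sup>2)"
    using indep_vars_sum[OF insert.hyps(1,3) ind2] .
  have d1: "distributed M lborel (\<lambda>\<omega>. (Z i \<omega>)\<^sup>2) (gd (1/2))"
    using square_std_normal insert.prems(2) by simp
  have d2: "distributed M lborel (\<lambda>\<omega>. \<Sum>j\<in>I. (Z j \<omega>)\<^sup>2) (gd (real (card I) / 2))"
    using insert.hyps(4) insert.prems indep_vars_subset[OF insert.prems(1)] by (auto simp: chi2_gd)
  have "distributed M lborel (\<lambda>\<omega>. (Z i \<omega>)\<^sup>2 + (\<Sum>j\<in>I. (Z j \<omega>)\<^sup>2))
          (\<lambda>x. \<integral>\<^sup>+y. ennreal (gd (1/2) (x - y)) * ennreal (gd (real (card I) / 2) y) \<partial>lborel)"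
    by (rule distributed_convolution[OF iv d1 d2])
  also have "(\<lambda>x. \<integral>\<^sup>+y. ennreal (gd (1/2) (x - y)) * ennreal (gd (real (card I) / 2) y) \<partial>lborel)
      = (\<lambda>x. ennreal (gd (1/2 + real (card I) / 2) x))"
    using conv_gd[of "1/2" "real (card I) / 2"] insert.hyps(1,2) by (simp add: card_gt_0_iff)
  finally show ?case using insert.hyps(1,3)
    by (simp add: chi2_gd add_divide_distrib)
qed

lemma (in prob_space) lin_comb_normal:
  assumes fin: "finite K" and ind: "indep_vars (\<lambda>_. borel) V K"
    and nd: "\<And>j. j \<in> K \<Longrightarrow> distributed M lborel (V j) (normal_density 0 (\<sigma> j))"
    and sp: "\<And>j. j \<in> K \<Longrightarrow> \<sigma> j > 0"
    and pos: "(\<Sum>j\<in>K. (a j * \<sigma> j)\<^sup>2) > 0"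
  shows "distributed M lborel (\<lambda>\<omega>. \<Sum>j\<in>K. a j * V j \<omega>) (normal_density 0 (sqrt (\<Sum>j\<in>K. (a j * \<sigma> j)\<^sup>2)))"
proof -
  define K' where "K' = {j\<in>K. a j \<noteq> 0}"
  have K'K: "K' \<subseteq> K" and finK': "finite K'" using fin by (auto simp: K'_def)
  have s1: "(\<Sum>j\<in>K. a j * V j \<omega>) = (\<Sum>j\<in>K'. a j * V j \<omega>)" for \<omega>
    by (rule sum.mono_neutral_cong_right[OF fin K'K]) (auto simp: K'_def)
  have s2: "(\<Sum>j\<in>K. (a j * \<sigma> j)\<^sup>2) = (\<Sum>j\<in>K'. (a j * \<sigma> j)\<^sup>2)"
    by (rule sum.mono_neutral_cong_right[OF fin K'K]) (auto simp: K'_def)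
  have ne: "K' \<noteq> {}" using pos s2 by auto
  have ind': "indep_vars (\<lambda>_. borel) (\<lambda>j \<omega>. a j * V j \<omega>) K'"
    by (rule indep_vars_compose2[OF indep_vars_subset[OF ind K'K]]) simp
  have nd': "distributed M lborel (\<lambda>\<omega>. a j * V j \<omega>) (normal_density 0 (\<bar>a j\<bar> * \<sigma> j))" if "j \<in> K'" for j
    using normal_density_affine[OF nd[of j] sp[of j], of "a j" 0] that by (auto simp: K'_def)
  have "distributed M lborel (\<lambda>\<omega>. \<Sum>j\<in>K'. a j * V j \<omega>)
          (normal_density (\<Sum>j\<in>K'. 0) (sqrt (\<Sum>j\<in>K'. (\<bar>a j\<bar> * \<sigma> j)\<^sup>2)))"
    by (rule sum_indep_normal[OF finK' ne ind']) (use nd' sp K'K K'_def in auto)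
  moreover have e: "(\<Sum>j\<in>K'. (\<bar>a j\<bar> * \<sigma> j)\<^sup>2) = (\<Sum>j\<in>K. (a j * \<sigma> j)\<^sup>2)"
    unfolding s2 by (simp add: power_mult_distrib)
  moreover have fe: "(\<lambda>\<omega>. \<Sum>j\<in>K. a j * V j \<omega>) = (\<lambda>\<omega>. \<Sum>j\<in>K'. a j * V j \<omega>)"
    using s1 by simp
  ultimately show ?thesis by (simp only: e fe sum.neutral_const)
qed

lemma (in prob_space) indep_blocks:
  fixes V :: "'j \<Rightarrow> 'a \<Rightarrow> real"
  assumes ind: "indep_vars (\<lambda>_. borel) V J"
    and K: "\<And>n. n \<in> I \<Longrightarrow> K n \<subseteq> J" "\<And>n. n \<in> I \<Longrightarrow> finite (K n)"
    and disj: "disjoint_family_on K I"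
  shows "indep_vars (\<lambda>_. borel) (\<lambda>n \<omega>. \<Sum>j\<in>K n. a j * V j \<omega>) I"
proof -
  have r: "indep_vars (\<lambda>n. PiM (K n) (\<lambda>_. borel)) (\<lambda>n \<omega>. restrict (\<lambda>j. V j \<omega>) (K n)) I"
    by (rule indep_vars_restrict[OF ind K(1) disj])
  have "indep_vars (\<lambda>_. borel) (\<lambda>n \<omega>. (\<lambda>f. \<Sum>j\<in>K n. a j * f j) (restrict (\<lambda>j. V j \<omega>) (K n))) I"
  proof (rule indep_vars_compose2[OF r])
    fix n assume "n \<in> I"
    show "(\<lambda>f. \<Sum>j\<in>K n. a j * f j) \<in> borel_measurable (PiM (K n) (\<lambda>_. borel))"
    proof (rule borel_measurable_sum[where f = "\<lambda>j g. a j * g j"])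
      fix j assume "j \<in> K n"
      then show "(\<lambda>f. a j * f j) \<in> borel_measurable (PiM (K n) (\<lambda>_. borel))"
        by (intro borel_measurable_times borel_measurable_const measurable_component_singleton)
    qed
  qed
  moreover have "(\<lambda>f. \<Sum>j\<in>K n. a j * f j) (restrict (\<lambda>j. V j \<omega>) (K n)) = (\<Sum>j\<in>K n. a j * V j \<omega>)" for n \<omega>
    by (rule sum.cong) auto
  ultimately show ?thesis by simp
qed

lemma (in prob_space) chi2_tail:
  assumes S: "distributed M lborel S (chi2_density d)" and d: "d > 0"
  shows "prob {\<omega>\<in>space M. S \<omega> > t} = Q_chi2 d t"
proof -
  have nn: "0 \<le> chi2_density d x" for x using d by (simp add: chi2_gd gd_nonneg)
  have Sm[measurable]: "S \<in> borel_measurable M" using distributed_measurable[OF S] by simp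
  have "emeasure M (S -` UNIV \<inter> space M) = (\<integral>\<^sup>+x. ennreal (chi2_density d x) * indicator UNIV x \<partial>lborel)"
    by (rule distributed_emeasure[OF S]) simp
  then have one: "(\<integral>\<^sup>+x. ennreal (chi2_density d x) \<partial>lborel) = 1"
    by (simp add: emeasure_space_1)
  have int: "integrable lborel (chi2_density d)"
    by (rule integrableI_nonneg) (use one nn in \<open>auto simp: chi2_gd\<close>)
  have "emeasure M (S -` {t<..} \<inter> space M) = (\<integral>\<^sup>+x. ennreal (chi2_density d x) * indicator {t<..} x \<partial>lborel)"
    by (rule distributed_emeasure[OF S]) simp
  also have "\<dots> = (\<integral>\<^sup>+x. ennreal (indicator {t<..} x *\<^sub>R chi2_density d x) \<partial>lborel)"
    by (intro nn_integral_cong) (simp add: indicator_def)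
  also have "\<dots> = ennreal (\<integral>x. indicator {t<..} x *\<^sub>R chi2_density d x \<partial>lborel)"
  proof (rule nn_integral_eq_integral)
    show "integrable lborel (\<lambda>x. indicator {t<..} x *\<^sub>R chi2_density d x)"
      by (rule integrable_mult_indicator) (simp_all add: int)
    show "AE x in lborel. 0 \<le> indicator {t<..} x *\<^sub>R chi2_density d x"
      using nn by (simp add: indicator_def)
  qed
  also have "\<dots> = ennreal (Q_chi2 d t)"
    by (simp add: Q_chi2_def set_lebesgue_integral_def)
  finally have e: "emeasure M (S -` {t<..} \<inter> space M) = ennreal (Q_chi2 d t)" .
  have "Q_chi2 d t \<ge> 0"
    unfolding Q_chi2_def set_lebesgue_integral_def by (rule integral_nonneg_AE) (simp add: nn indicator_def)
  moreover have "S -` {t<..} \<inter> space M = {\<omega>\<in>space M. S \<omega> > t}" by auto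
  ultimately show ?thesis using e by (simp add: emeasure_eq_measure)
qed

lemma (in prob_space) main_generic:
  assumes ind: "indep_vars (\<lambda>_. borel) V J"
    and finI: "finite I" and neI: "I \<noteq> {}"
    and K: "\<And>n. n \<in> I \<Longrightarrow> K n \<subseteq> J" "\<And>n. n \<in> I \<Longrightarrow> finite (K n)"
    and disj: "disjoint_family_on K I"
    and nd: "\<And>j. j \<in> J \<Longrightarrow> distributed M lborel (V j) (normal_density 0 (\<sigma> j))"
    and sp: "\<And>j. j \<in> J \<Longrightarrow> \<sigma> j > 0"
    and var: "\<And>n. n \<in> I \<Longrightarrow> (\<Sum>j\<in>K n. (a j * \<sigma> j)\<^sup>2) = s\<^sup>2"
    and s: "s > 0" and c: "c > 0"
  shows "prob {\<omega>\<in>space M. (\<Sum>n\<in>I. (\<Sum>j\<in>K n. a j * V j \<omega>)\<^sup>2) / c > \<gamma>} = Q_chi2 (card I) (\<gamma> * c / s\<^sup>2)"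
proof -
  define Y where "Y n \<omega> = (\<Sum>j\<in>K n. a j * V j \<omega>)" for n \<omega>
  define Z where "Z n \<omega> = Y n \<omega> / s" for n \<omega>
  have Yd: "distributed M lborel (Y n) (normal_density 0 s)" if n: "n \<in> I" for n
  proof -
    have "distributed M lborel (Y n) (normal_density 0 (sqrt (\<Sum>j\<in>K n. (a j * \<sigma> j)\<^sup>2)))"
      unfolding Y_def
      by (rule lin_comb_normal[OF K(2)[OF n] indep_vars_subset[OF ind K(1)[OF n]]])
         (use nd sp K(1)[OF n] var[OF n] s in auto)
    then show ?thesis using var[OF n] s by simp
  qed
  have Zd: "distributed M lborel (Z n) std_normal_density" if n: "n \<in> I" for n
    using normal_standard_normal_convert[OF s, of "Y n" 0] Yd[OF n]
    by (simp add: Z_def[abs_def])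
  have indZ: "indep_vars (\<lambda>_. borel) Z I"
  proof -
    have "indep_vars (\<lambda>_. borel) (\<lambda>n \<omega>. (\<lambda>x. x / s) (Y n \<omega>)) I"
      by (rule indep_vars_compose2[OF indep_blocks[OF ind K disj, of a, folded Y_def]]) measurable
    then show ?thesis by (simp add: Z_def[abs_def])
  qed
  have chi: "distributed M lborel (\<lambda>\<omega>. \<Sum>n\<in>I. (Z n \<omega>)\<^sup>2) (chi2_density (card I))"
    by (rule chi2_sum[OF finI neI indZ Zd])
  have eq: "{\<omega>\<in>space M. (\<Sum>n\<in>I. (\<Sum>j\<in>K n. a j * V j \<omega>)\<^sup>2) / c > \<gamma>} =
            {\<omega>\<in>space M. (\<Sum>n\<in>I. (Z n \<omega>)\<^sup>2) > \<gamma> * c / s\<^sup>2}"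
  proof -
    have "(\<Sum>n\<in>I. (\<Sum>j\<in>K n. a j * V j \<omega>)\<^sup>2) = s\<^sup>2 * (\<Sum>n\<in>I. (Z n \<omega>)\<^sup>2)" for \<omega>
      using s by (simp add: Z_def Y_def sum_distrib_left power_divide)
    then show ?thesis using s c by (auto simp: field_simps)
  qed
  show ?thesis unfolding eq
    by (rule chi2_tail[OF chi]) (use finI neI in \<open>simp add: card_gt_0_iff\<close>)
qed

lemma sumK:
  fixes g :: "(nat \<times> 'k::finite) + (nat \<times> nat \<times> 'n::finite) \<Rightarrow> real"
  shows "(\<Sum>j\<in>Inl ` ((\<lambda>k. (n, k)) ` UNIV) \<union> Inr ` ((\<lambda>(m, i). (m, n, i)) ` ({1..M1} \<times> UNIV)). g j)
     = (\<Sum>k\<in>UNIV. g (Inl (n, k))) + (\<Sum>m\<in>{1..M1}. \<Sum>i\<in>UNIV. g (Inr (m, n, i)))"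
proof -
  have "(\<Sum>j\<in>Inl ` ((\<lambda>k. (n, k)) ` UNIV) \<union> Inr ` ((\<lambda>(m, i). (m, n, i)) ` ({1..M1} \<times> UNIV)). g j)
    = (\<Sum>j\<in>Inl ` ((\<lambda>k. (n, k)) ` UNIV). g j) + (\<Sum>j\<in>Inr ` ((\<lambda>(m, i). (m, n, i)) ` ({1..M1} \<times> UNIV)). g j)"
    by (rule sum.union_disjoint) auto
  also have "(\<Sum>j\<in>Inl ` ((\<lambda>k. (n, k)) ` UNIV). g j) = (\<Sum>k\<in>UNIV. g (Inl (n, k)))"
    by (simp add: sum.reindex inj_on_def)
  also have "(\<Sum>j\<in>Inr ` ((\<lambda>(m, i). (m, n, i)) ` ({1..M1} \<times> UNIV)). g j)
      = (\<Sum>x\<in>(\<lambda>(m, i). (m, n, i)) ` ({1..M1} \<times> UNIV). g (Inr x))"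
    by (simp add: sum.reindex)
  also have "\<dots> = (\<Sum>p\<in>{1..M1} \<times> UNIV. g (Inr ((\<lambda>(m, i). (m, n, i)) p)))"
    by (rule sum.reindex[unfolded comp_def]) (auto simp: inj_on_def)
  also have "\<dots> = (\<Sum>(m, i)\<in>{1..M1} \<times> UNIV. g (Inr (m, n, i)))"
    by (simp add: case_prod_unfold)
  also have "\<dots> = (\<Sum>m\<in>{1..M1}. \<Sum>i\<in>UNIV. g (Inr (m, n, i)))"
    by (simp only: sum.cartesian_product)
  finally show ?thesis .
qed

theorem proposition2:
  fixes P :: "'a measure"
    and H :: "real^'k^'n" and u1 :: "real^'n" and rho1 :: real
    and M1 Nb :: nat and sx s0 \<gamma> :: real
    and X :: "nat \<Rightarrow> 'a \<Rightarrow> real^'k"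
    and W :: "nat \<Rightarrow> nat \<Rightarrow> 'a \<Rightarrow> real^'n"
  assumes "prob_space P"
    and "CARD('k) \<le> CARD('n)"
    and "rank H = CARD('k)"
    and "is_largest_eigenvalue (H ** transpose H) (rho1\<^sup>2)"
    and "norm u1 = 1" and "(H ** transpose H) *v u1 = rho1\<^sup>2 *\<^sub>R u1"
    and "M1 \<ge> 1" and "Nb \<ge> 1"
    and "sx > 0" and "s0 > 0" and "\<gamma> > 0"
    and "\<And>n k. n \<in> {1..Nb} \<Longrightarrow>
           distributed P lborel (\<lambda>\<omega>. X n \<omega> $ k) (normal_density 0 sx)"
    and "\<And>m n i. m \<in> {1..M1} \<Longrightarrow> n \<in> {1..Nb} \<Longrightarrow>
           distributed P lborel (\<lambda>\<omega>. W m n \<omega> $ i) (normal_density 0 s0)"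
    and "prob_space.indep_vars P (\<lambda>_. borel)
           (\<lambda>j \<omega>. case j of Inl (n, k) \<Rightarrow> X n \<omega> $ k | Inr (m, n, i) \<Rightarrow> W m n \<omega> $ i)
           ({(n, k). n \<in> {1..Nb}} <+> {(m, n, i). m \<in> {1..M1} \<and> n \<in> {1..Nb}})"
  shows
    "let phi = (\<lambda>m::nat. (1 / sqrt (real M1)) *\<^sub>R u1);
         z0 = (\<lambda>m n \<omega>. phi m \<bullet> W m n \<omega>);
         z1 = (\<lambda>m n \<omega>. phi m \<bullet> (H *v X n \<omega> + W m n \<omega>));
         zbar = (\<lambda>z n \<omega>. (1 / real M1) * (\<Sum>m\<in>{1..M1}. z m n \<omega>));
         T = (\<lambda>z \<omega>. (\<Sum>n\<in>{1..Nb}. \<bar>zbar z n \<omega>\<bar>\<^sup>2) / (s0\<^sup>2 / (real M1)\<^sup>2))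
     in prob_space.prob P {\<omega>\<in>space P. T z0 \<omega> > \<gamma>} = Q_chi2 Nb \<gamma> \<and>
        prob_space.prob P {\<omega>\<in>space P. T z1 \<omega> > \<gamma>} =
          Q_chi2 Nb (s0\<^sup>2 / (s0\<^sup>2 + real M1 * sx\<^sup>2 * rho1\<^sup>2) * \<gamma>)"
proof -
  interpret prob_space P by fact
  note u1n = assms(5) and eig = assms(6) and M1 = assms(7) and Nb = assms(8)
    and sx = assms(9) and s0 = assms(10)
  define J where "J = (({(n, k). n \<in> {1..Nb}} <+> {(m, n, i). m \<in> {1..M1} \<and> n \<in> {1..Nb}})
     :: ((nat \<times> 'k) + (nat \<times> nat \<times> 'n)) set)"
  define V where "V = (\<lambda>j \<omega>. case j of Inl (n, k) \<Rightarrow> X n \<omega> $ k | Inr (m, n, i) \<Rightarrow> W m n \<omega> $ i)"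
  define \<sigma> where "\<sigma> j = (case j of Inl _ \<Rightarrow> sx | Inr _ \<Rightarrow> s0)"
    for j :: "(nat \<times> 'k) + (nat \<times> nat \<times> 'n)"
  define K where "K n = (Inl ` ((\<lambda>k. (n, k)) ` UNIV) \<union> Inr ` ((\<lambda>(m, i). (m, n, i)) ` ({1..M1} \<times> UNIV))
      :: ((nat \<times> 'k) + (nat \<times> nat \<times> 'n)) set)"
    for n :: nat
  have ind: "indep_vars (\<lambda>_. borel) V J"
    using assms(14) unfolding V_def J_def .
  have nd: "distributed P lborel (V j) (normal_density 0 (\<sigma> j))" if "j \<in> J" for j
  proof (cases j)
    case (Inl p) then obtain n k where "p = (n, k)" by (cases p)
    then show ?thesis using that Inl assms(12)[of n k] by (auto simp: J_def V_def \<sigma>_def)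
  next
    case (Inr p) then obtain m n i where "p = (m, n, i)" by (cases p) auto
    then show ?thesis using that Inr assms(13)[of m n i] by (auto simp: J_def V_def \<sigma>_def)
  qed
  have sp: "\<sigma> j > 0" for j using sx s0 by (cases j) (auto simp: \<sigma>_def)
  have KJ: "K n \<subseteq> J" if "n \<in> {1..Nb}" for n using that by (auto simp: K_def J_def)
  have Kfin: "finite (K n)" for n by (simp add: K_def)
  have disj: "disjoint_family_on K {1..Nb}" by (auto simp: disjoint_family_on_def K_def)
  define b where "b = transpose H *v u1"
  have bx: "u1 \<bullet> (H *v x) = b \<bullet> x" for x
    by (simp add: b_def dot_lmul_matrix)
  have uu: "u1 \<bullet> u1 = 1" using u1n by (simp add: dot_square_norm)
  have uu': "(\<Sum>i\<in>UNIV. (u1 $ i)\<^sup>2) = 1" using uu by (simp add: inner_vec_def power2_eq_square)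
  have bb: "(\<Sum>k\<in>UNIV. (b $ k)\<^sup>2) = rho1\<^sup>2"
  proof -
    have "b \<bullet> b = u1 \<bullet> (H *v b)" by (simp add: bx)
    also have "\<dots> = u1 \<bullet> ((H ** transpose H) *v u1)" unfolding b_def by (simp only: matrix_vector_mul_assoc)
    also have "\<dots> = rho1\<^sup>2" using eig uu by simp
    finally show ?thesis by (simp add: inner_vec_def power2_eq_square)
  qed
  define a0 where "a0 j = (case j of Inl _ \<Rightarrow> 0 | Inr (m, n, i) \<Rightarrow> u1 $ i / (real M1 * sqrt (real M1)))"
    for j :: "(nat \<times> 'k) + (nat \<times> nat \<times> 'n)"
  define a1 where "a1 j = (case j of Inl (n, k) \<Rightarrow> b $ k / sqrt (real M1) | Inr (m, n, i) \<Rightarrow> u1 $ i / (real M1 * sqrt (real M1)))"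
    for j :: "(nat \<times> 'k) + (nat \<times> nat \<times> 'n)"
  have M1p: "real M1 > 0" using M1 by simp
  have wsum: "(\<Sum>m\<in>{1..M1}. \<Sum>i\<in>UNIV. (u1 $ i / (real M1 * sqrt (real M1)) * s0)\<^sup>2) = (s0 / real M1)\<^sup>2"
  proof -
    have "(\<Sum>m\<in>{1..M1}. \<Sum>i\<in>UNIV. (u1 $ i / (real M1 * sqrt (real M1)) * s0)\<^sup>2)
        = real M1 * ((s0\<^sup>2 / (real M1)^3) * (\<Sum>i\<in>UNIV. (u1 $ i)\<^sup>2))"
    proof -
      have pt: "(u1 $ i / (real M1 * sqrt (real M1)) * s0)\<^sup>2 = (s0\<^sup>2 / (real M1)^3) * (u1 $ i)\<^sup>2" for i
      proof -
        have d: "(real M1 * sqrt (real M1))\<^sup>2 = real M1 ^ 3"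
          by (simp add: power_mult_distrib power3_eq_cube power2_eq_square)
        show ?thesis by (simp add: power_mult_distrib power_divide d) (simp add: power3_eq_cube power2_eq_square mult_ac)
      qed
      show ?thesis by (simp only: pt sum_distrib_left[symmetric]) simp
    qed
    also have "\<dots> = (s0 / real M1)\<^sup>2" using M1p by (simp add: uu'[unfolded power2_eq_square] power2_eq_square power3_eq_cube)
    finally show ?thesis .
  qed
  have var0: "(\<Sum>j\<in>K n. (a0 j * \<sigma> j)\<^sup>2) = (s0 / real M1)\<^sup>2" for n
    unfolding K_def sumK using wsum by (simp add: a0_def \<sigma>_def)
  define s1 where "s1 = sqrt ((s0 / real M1)\<^sup>2 + sx\<^sup>2 * rho1\<^sup>2 / real M1)"
  have s1p: "s1 > 0" using s0 M1p sx unfolding s1_def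
    by (intro real_sqrt_gt_zero add_pos_nonneg) auto
  have var1: "(\<Sum>j\<in>K n. (a1 j * \<sigma> j)\<^sup>2) = s1\<^sup>2" for n
  proof -
    have "(\<Sum>k\<in>UNIV. (b $ k / sqrt (real M1) * sx)\<^sup>2) = sx\<^sup>2 * rho1\<^sup>2 / real M1"
      using M1p by (simp add: power_mult_distrib power_divide sum_divide_distrib[symmetric]
                      sum_distrib_left[symmetric] sum_distrib_right[symmetric] bb mult.commute)
    then show ?thesis
      unfolding K_def sumK using M1p wsum by (simp add: a1_def \<sigma>_def s1_def)
  qed
  have z0eq: "(1 / real M1) * (\<Sum>m\<in>{1..M1}. ((1 / sqrt (real M1)) *\<^sub>R u1) \<bullet> W m n \<omega>) = (\<Sum>j\<in>K n. a0 j * V j \<omega>)" for n \<omega>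
    unfolding K_def sumK
    by (simp add: a0_def V_def inner_vec_def sum_distrib_left field_simps)
  have z1eq: "(1 / real M1) * (\<Sum>m\<in>{1..M1}. ((1 / sqrt (real M1)) *\<^sub>R u1) \<bullet> (H *v X n \<omega> + W m n \<omega>)) = (\<Sum>j\<in>K n. a1 j * V j \<omega>)" for n \<omega>
  proof -
    have "(\<Sum>m\<in>{1..M1}. ((1 / sqrt (real M1)) *\<^sub>R u1) \<bullet> (H *v X n \<omega> + W m n \<omega>))
      = real M1 * ((1 / sqrt (real M1)) * (b \<bullet> X n \<omega>)) + (\<Sum>m\<in>{1..M1}. ((1 / sqrt (real M1)) *\<^sub>R u1) \<bullet> W m n \<omega>)"
      by (simp add: inner_add_right sum.distrib bx)
    then have "(1 / real M1) * (\<Sum>m\<in>{1..M1}. ((1 / sqrt (real M1)) *\<^sub>R u1) \<bullet> (H *v X n \<omega> + W m n \<omega>))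
      = (1 / sqrt (real M1)) * (b \<bullet> X n \<omega>) + (\<Sum>j\<in>K n. a0 j * V j \<omega>)"
      using M1p z0eq[of n \<omega>] by (simp add: distrib_left)
    also have "\<dots> = (\<Sum>j\<in>K n. a1 j * V j \<omega>)"
      unfolding K_def sumK
      by (simp add: a0_def a1_def V_def inner_vec_def sum_distrib_left field_simps)
    finally show ?thesis .
  qed
  have c: "s0\<^sup>2 / (real M1)\<^sup>2 > 0" using s0 M1p by simp
  have G0: "prob {\<omega>\<in>space P. (\<Sum>n\<in>{1..Nb}. (\<Sum>j\<in>K n. a0 j * V j \<omega>)\<^sup>2) / (s0\<^sup>2 / (real M1)\<^sup>2) > \<gamma>}
      = Q_chi2 (card {1..Nb}) (\<gamma> * (s0\<^sup>2 / (real M1)\<^sup>2) / (s0 / real M1)\<^sup>2)"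
    by (rule main_generic[OF ind _ _ KJ Kfin disj nd sp var0 _ c]) (use Nb s0 M1p in auto)
  have G1: "prob {\<omega>\<in>space P. (\<Sum>n\<in>{1..Nb}. (\<Sum>j\<in>K n. a1 j * V j \<omega>)\<^sup>2) / (s0\<^sup>2 / (real M1)\<^sup>2) > \<gamma>}
      = Q_chi2 (card {1..Nb}) (\<gamma> * (s0\<^sup>2 / (real M1)\<^sup>2) / s1\<^sup>2)"
    by (rule main_generic[OF ind _ _ KJ Kfin disj nd sp var1 s1p c]) (use Nb in auto)
  have arg0: "\<gamma> * (s0\<^sup>2 / (real M1)\<^sup>2) / (s0 / real M1)\<^sup>2 = \<gamma>"
    using s0 M1p by (simp add: power_divide)
  have arg1: "\<gamma> * (s0\<^sup>2 / (real M1)\<^sup>2) / s1\<^sup>2 = s0\<^sup>2 / (s0\<^sup>2 + real M1 * sx\<^sup>2 * rho1\<^sup>2) * \<gamma>"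
  proof -
    have "s1\<^sup>2 = (s0\<^sup>2 + real M1 * sx\<^sup>2 * rho1\<^sup>2) / (real M1)\<^sup>2"
    proof -
      have "0 \<le> (s0 / real M1)\<^sup>2 + sx\<^sup>2 * rho1\<^sup>2 / real M1" using M1p by simp
      then have "s1\<^sup>2 = (s0 / real M1)\<^sup>2 + sx\<^sup>2 * rho1\<^sup>2 / real M1" unfolding s1_def by simp
      also have "\<dots> = (s0\<^sup>2 + real M1 * sx\<^sup>2 * rho1\<^sup>2) / (real M1)\<^sup>2"
        using M1p by (simp add: field_simps power2_eq_square)
      finally show ?thesis .
    qed
    moreover have "s0\<^sup>2 + real M1 * sx\<^sup>2 * rho1\<^sup>2 > 0" using s0 M1p
      by (intro add_pos_nonneg) auto
    ultimately show ?thesis using M1p by (simp add: field_simps)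
  qed
  show ?thesis
    unfolding Let_def
    using G0 G1 arg0 arg1 z0eq z1eq
    by (simp add: power2_abs)
qed

end
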